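(* Let $k$ be a positive integer. (a) For $n \ge 1$, $\dim_{k,f}(P_n+K_1)=\dim_f(P_n+K_1)$, and this common value equals $\frac{n+1}{2}$ if $n \in\{1,2,3\}$; $\frac{5}{3}$ if $n \in \{4,5\}$; $\frac{n+1}{4}$ if $n \ge 6$ and $n\equiv 1$ or $3\pmod 4$; and $\frac{n+2}{4}$ if $n \ge 6$ and $n\equiv 2\pmod4$. (b) If $n\ge 8$ and $n\equiv 0 \pmod4$, then $\frac{n}{4} \le \dim_{k,f}(P_n+K_1)=\dim_f(P_n+K_1)\le \frac{n+2}{4}$.
   Context: $P_n$ is the path on $n$ vertices, $K_1$ a single vertex, and $G+H$ denotes the join (disjoint union plus all edges between the two graphs). $d(x,y)$ is the distance in $G$. For a function $g$ on $V(G)$ and $U\subseteq V(G)$, $g(U)=\sum_{s\in U}g(s)$. $R\{x,y\}=\{z\in V(G): d(x,z)\ne d(y,z)\}$; a function $g:V(G)\to[0,1]$ is a resolving function if $g(R\{x,y\})\ge1$ for all distinct $x,y$, and $\dim_f(G)$ is the minimum of $g(V(G))$ over resolving functions. For a positive integer $k$, $d_k(x,y)=\min\{d(x,y),k+1\}$, $R_k\{x,y\}=\{z: d_k(x,z)\neq d_k(y,z)\}$; $h:V(G)\to[0,1]$ is a $k$-truncated resolving function if $h(R_k\{x,y\})\ge 1$ for all distinct $x,y$, and $\dim_{k,f}(G)$ is the minimum of $h(V(G))$ over such $h$. *)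

theory Defs
  imports Complex_Main
begin

text \<open>A graph is given by a vertex set V and a symmetric adjacency relation E
  (assumed to only relate vertices of V).\<close>

inductive walk :: "('a \<Rightarrow> 'a \<Rightarrow> bool) \<Rightarrow> nat \<Rightarrow> 'a \<Rightarrow> 'a \<Rightarrow> bool"
  for E where
  walk0: "walk E 0 x x"
| walkS: "E x z \<Longrightarrow> walk E n z y \<Longrightarrow> walk E (Suc n) x y"

text \<open>Graph distance: length of a shortest walk (graphs considered are connected).\<close>
definition gdist :: "('a \<Rightarrow> 'a \<Rightarrow> bool) \<Rightarrow> 'a \<Rightarrow> 'a \<Rightarrow> nat" where
  "gdist E x y = (LEAST n. walk E n x y)"

definition tdist :: "nat \<Rightarrow> ('a \<Rightarrow> 'a \<Rightarrow> bool) \<Rightarrow> 'a \<Rightarrow> 'a \<Rightarrow> nat" where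
  "tdist k E x y = min (gdist E x y) (k + 1)"

definition resolving_set :: "'a set \<Rightarrow> ('a \<Rightarrow> 'a \<Rightarrow> bool) \<Rightarrow> 'a \<Rightarrow> 'a \<Rightarrow> 'a set" where
  "resolving_set V E x y = {z \<in> V. gdist E x z \<noteq> gdist E y z}"

definition tresolving_set :: "nat \<Rightarrow> 'a set \<Rightarrow> ('a \<Rightarrow> 'a \<Rightarrow> bool) \<Rightarrow> 'a \<Rightarrow> 'a \<Rightarrow> 'a set" where
  "tresolving_set k V E x y = {z \<in> V. tdist k E x z \<noteq> tdist k E y z}"

definition resolving_function :: "'a set \<Rightarrow> ('a \<Rightarrow> 'a \<Rightarrow> bool) \<Rightarrow> ('a \<Rightarrow> real) \<Rightarrow> bool" where
  "resolving_function V E g \<longleftrightarrow>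
     (\<forall>v\<in>V. 0 \<le> g v \<and> g v \<le> 1) \<and>
     (\<forall>x\<in>V. \<forall>y\<in>V. x \<noteq> y \<longrightarrow> sum g (resolving_set V E x y) \<ge> 1)"

definition tresolving_function :: "nat \<Rightarrow> 'a set \<Rightarrow> ('a \<Rightarrow> 'a \<Rightarrow> bool) \<Rightarrow> ('a \<Rightarrow> real) \<Rightarrow> bool" where
  "tresolving_function k V E h \<longleftrightarrow>
     (\<forall>v\<in>V. 0 \<le> h v \<and> h v \<le> 1) \<and>
     (\<forall>x\<in>V. \<forall>y\<in>V. x \<noteq> y \<longrightarrow> sum h (tresolving_set k V E x y) \<ge> 1)"

definition frac_dim :: "'a set \<Rightarrow> ('a \<Rightarrow> 'a \<Rightarrow> bool) \<Rightarrow> real" where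
  "frac_dim V E = Inf {sum g V | g. resolving_function V E g}"

definition trunc_frac_dim :: "nat \<Rightarrow> 'a set \<Rightarrow> ('a \<Rightarrow> 'a \<Rightarrow> bool) \<Rightarrow> real" where
  "trunc_frac_dim k V E = Inf {sum h V | h. tresolving_function k V E h}"

text \<open>The fan P_n + K_1: path vertices 0,...,n-1 (i adjacent to i+1), plus the
  vertex n joined to all path vertices.\<close>
definition fan_V :: "nat \<Rightarrow> nat set" where
  "fan_V n = {0..n}"

definition fan_E :: "nat \<Rightarrow> nat \<Rightarrow> nat \<Rightarrow> bool" where
  "fan_E n x y \<longleftrightarrow> x \<le> n \<and> y \<le> n \<and> x \<noteq> y \<and>
     (x = n \<or> y = n \<or> x + 1 = y \<or> y + 1 = x)"

end

theory Submission
  imports Defs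
begin


definition fd :: "nat \<Rightarrow> nat \<Rightarrow> nat \<Rightarrow> nat" where
  "fd n x y = (if x = y then 0 else if fan_E n x y then 1 else 2)"

lemma walk0_inv: "walk E 0 x y \<Longrightarrow> x = y"
  by (erule walk.cases) auto

lemma walk1_inv: "walk E (Suc 0) x y \<Longrightarrow> E x y"
  by (erule walk.cases) (auto dest: walk0_inv)

lemma gdist_fan:
  assumes "n \<ge> 1" "x \<le> n" "y \<le> n"
  shows "gdist (fan_E n) x y = fd n x y"
  unfolding gdist_def
proof (rule Least_equality)
  show "walk (fan_E n) (fd n x y) x y"
  proof (cases "x = y")
    case True then show ?thesis by (simp add: fd_def walk0)
  next
    case F: False
    show ?thesis
    proof (cases "fan_E n x y")
      case True then show ?thesis using F by (simp add: fd_def walkS walk0)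
    next
      case False
      then have "x \<noteq> n" "y \<noteq> n" using F assms by (auto simp: fan_E_def)
      then have "fan_E n x n" "fan_E n n y" using assms by (auto simp: fan_E_def)
      then have "walk (fan_E n) 2 x y"
        by (metis walkS walk0 numeral_2_eq_2)
      then show ?thesis using F False by (simp add: fd_def)
    qed
  qed
next
  fix m assume w: "walk (fan_E n) m x y"
  show "fd n x y \<le> m"
  proof (cases m)
    case 0 then show ?thesis using w walk0_inv by (auto simp: fd_def)
  next
    case (Suc m')
    show ?thesis
    proof (cases m')
      case 0
      then have "walk (fan_E n) (Suc 0) x y" using w Suc by simp
      then have "fan_E n x y" by (rule walk1_inv)
      then show ?thesis using Suc by (auto simp: fd_def)
    next
      case (Suc m'') then show ?thesis using \<open>m = Suc m'\<close> by (auto simp: fd_def)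
    qed
  qed
qed

definition Rf :: "nat \<Rightarrow> nat \<Rightarrow> nat \<Rightarrow> nat set" where
  "Rf n x y = {z. z \<le> n \<and> fd n x z \<noteq> fd n y z}"

lemma rset_fan:
  assumes "n \<ge> 1" "x \<le> n" "y \<le> n"
  shows "resolving_set (fan_V n) (fan_E n) x y = Rf n x y"
  using assms by (auto simp: resolving_set_def Rf_def fan_V_def gdist_fan)

lemma fd_le2: "fd n x y \<le> 2" by (simp add: fd_def)

lemma trset_fan:
  assumes "k \<ge> 1" "n \<ge> 1" "x \<le> n" "y \<le> n"
  shows "tresolving_set k (fan_V n) (fan_E n) x y = Rf n x y"
proof -
  have "\<And>z. z \<le> n \<Longrightarrow> tdist k (fan_E n) x z = fd n x z \<and> tdist k (fan_E n) y z = fd n y z"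
  proof -
    fix z assume "z \<le> n"
    have "fd n x z \<le> k + 1" "fd n y z \<le> k + 1" using fd_le2[of n x z] fd_le2[of n y z] assms by auto
    then show "tdist k (fan_E n) x z = fd n x z \<and> tdist k (fan_E n) y z = fd n y z"
      using assms \<open>z \<le> n\<close> by (simp add: tdist_def gdist_fan)
  qed
  then show ?thesis using assms by (auto simp: tresolving_set_def Rf_def fan_V_def)
qed

definition RF :: "nat \<Rightarrow> (nat \<Rightarrow> real) \<Rightarrow> bool" where
  "RF n g \<longleftrightarrow> (\<forall>v\<le>n. 0 \<le> g v \<and> g v \<le> 1) \<and>
     (\<forall>x\<le>n. \<forall>y\<le>n. x \<noteq> y \<longrightarrow> sum g (Rf n x y) \<ge> 1)"

lemma rf_fan: assumes "n \<ge> 1" shows "resolving_function (fan_V n) (fan_E n) g \<longleftrightarrow> RF n g"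
  unfolding resolving_function_def RF_def fan_V_def atLeastAtMost_iff
  using rset_fan[OF assms] by (auto simp: fan_V_def)

lemma rf_fan': assumes "n \<ge> 1" shows "resolving_function {0..n} (fan_E n) g \<longleftrightarrow> RF n g"
  using rf_fan[OF assms] by (simp add: fan_V_def)

lemma trf_fan: assumes "k \<ge> 1" "n \<ge> 1" shows "tresolving_function k (fan_V n) (fan_E n) g \<longleftrightarrow> RF n g"
  unfolding tresolving_function_def RF_def fan_V_def atLeastAtMost_iff
  using trset_fan[OF assms] by (auto simp: fan_V_def)

lemma trunc_eq: "k \<ge> 1 \<Longrightarrow> n \<ge> 1 \<Longrightarrow> trunc_frac_dim k (fan_V n) (fan_E n) = frac_dim (fan_V n) (fan_E n)"
  by (simp add: trunc_frac_dim_def frac_dim_def rf_fan trf_fan)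

lemma fd_eq_min:
  assumes "n \<ge> 1" "RF n g0" "sum g0 {0..n} = c" "\<And>g. RF n g \<Longrightarrow> sum g {0..n} \<ge> c"
  shows "frac_dim (fan_V n) (fan_E n) = c"
  unfolding frac_dim_def
  by (rule cInf_eq_minimum) (use assms in \<open>auto simp: rf_fan' fan_V_def\<close>)

lemma fd_bounds:
  assumes "n \<ge> 1" "RF n g0" "sum g0 {0..n} \<le> c" "\<And>g. RF n g \<Longrightarrow> sum g {0..n} \<ge> a"
  shows "a \<le> frac_dim (fan_V n) (fan_E n) \<and> frac_dim (fan_V n) (fan_E n) \<le> c"
proof
  let ?S = "{sum g (fan_V n) |g. resolving_function (fan_V n) (fan_E n) g}"
  have ne: "sum g0 {0..n} \<in> ?S" using assms by (auto simp: rf_fan' fan_V_def)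
  show "a \<le> frac_dim (fan_V n) (fan_E n)" unfolding frac_dim_def
    by (rule cInf_greatest) (use ne assms in \<open>auto simp: rf_fan' fan_V_def\<close>)
  have "bdd_below ?S" by (rule bdd_belowI[of _ a]) (use assms in \<open>auto simp: rf_fan' fan_V_def\<close>)
  then have "Inf ?S \<le> sum g0 {0..n}" using ne by (simp add: cInf_lower)
  then show "frac_dim (fan_V n) (fan_E n) \<le> c" using assms(3) by (simp add: frac_dim_def)
qed




lemma RF_sub:
  assumes "RF n g" "x \<le> n" "y \<le> n" "x \<noteq> y" "Rf n x y \<subseteq> S" "S \<subseteq> {0..n}"
  shows "sum g S \<ge> 1"
proof -
  have "finite S" using assms(6) finite_subset by blast
  have "1 \<le> sum g (Rf n x y)" using assms unfolding RF_def by blast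
  also have "\<dots> \<le> sum g S"
    by (rule sum_mono2) (use assms \<open>finite S\<close> in \<open>auto simp: RF_def\<close>)
  finally show ?thesis .
qed

lemma Rf_subI:
  assumes "\<And>z. z \<le> n \<Longrightarrow> z \<notin> S \<Longrightarrow> fd n x z = fd n y z"
  shows "Rf n x y \<subseteq> S"
  using assms by (auto simp: Rf_def)

lemma W_int:
  assumes "RF n g" "j + 3 < n"
  shows "g j + g (j+1) + g (j+2) + g (j+3) \<ge> 1"
proof -
  have "Rf n (j+1) (j+2) \<subseteq> {j, j+1, j+2, j+3}"
    by (rule Rf_subI) (use assms in \<open>simp add: fd_def fan_E_def\<close>)
  then have "sum g {j, j+1, j+2, j+3} \<ge> 1"
    by (intro RF_sub[OF assms(1), of "j+1" "j+2"]) (use assms in auto)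
  then show ?thesis by simp
qed

lemma W_left:
  assumes "RF n g" "3 \<le> n"
  shows "g 0 + g 1 + g 2 \<ge> 1"
proof -
  have "Rf n 0 1 \<subseteq> {0, 1, 2}"
    by (rule Rf_subI) (use assms in \<open>simp add: fd_def fan_E_def\<close>)
  then have "sum g {0, 1, 2} \<ge> 1"
    by (intro RF_sub[OF assms(1), of 0 1]) (use assms in auto)
  then show ?thesis by simp
qed

lemma W_right:
  assumes "RF n g" "n = j + 3"
  shows "g j + g (j+1) + g (j+2) \<ge> 1"
proof -
  have "Rf n (j+1) (j+2) \<subseteq> {j, j+1, j+2}"
    by (rule Rf_subI) (use assms in \<open>simp add: fd_def fan_E_def\<close>)
  then have "sum g {j, j+1, j+2} \<ge> 1"
    by (intro RF_sub[OF assms(1), of "j+1" "j+2"]) (use assms in auto)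
  then show ?thesis by simp
qed

lemma W_end:
  assumes "RF n g" "n = j + 4"
  shows "g 0 + g 1 + g (j+2) + g (j+3) \<ge> 1"
proof -
  have "Rf n 0 (j+3) \<subseteq> {0, 1, j+2, j+3}"
    by (rule Rf_subI) (use assms in \<open>simp add: fd_def fan_E_def\<close>)
  then have "sum g {0, 1, j+2, j+3} \<ge> 1"
    by (intro RF_sub[OF assms(1), of 0 "j+3"]) (use assms in auto)
  then show ?thesis by (cases j) auto
qed

lemma sum_add3: "sum (f::nat\<Rightarrow>real) {..<a+3} = sum f {..<a} + f a + f (a+1) + f (a+2)"
proof -
  have "sum f {..<Suc (Suc (Suc a))} = sum f {..<a} + f a + f (Suc a) + f (Suc (Suc a))"
    by (simp only: sum.lessThan_Suc)
  moreover have "Suc (Suc (Suc a)) = a + 3" "Suc a = a + 1" "Suc (Suc a) = a + 2" by simp_all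
  ultimately show ?thesis by metis
qed

lemma sum_add4: "sum (f::nat\<Rightarrow>real) {..<a+4} = sum f {..<a} + f a + f (a+1) + f (a+2) + f (a+3)"
proof -
  have "sum f {..<Suc (Suc (Suc (Suc a)))} = sum f {..<a} + f a + f (Suc a) + f (Suc (Suc a)) + f (Suc (Suc (Suc a)))"
    by (simp only: sum.lessThan_Suc)
  moreover have "Suc (Suc (Suc (Suc a))) = a + 4" "Suc (Suc (Suc a)) = a + 3" "Suc a = a + 1" "Suc (Suc a) = a + 2" by simp_all
  ultimately show ?thesis by metis
qed

lemma left_sum:
  fixes f :: "nat \<Rightarrow> real"
  assumes w: "\<And>i. i + 3 < L \<Longrightarrow> f i + f (i+1) + f (i+2) + f (i+3) \<ge> 1"
    and l: "f 0 + f 1 + f 2 \<ge> 1"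
  shows "4*m+3 \<le> L \<Longrightarrow> sum f {..<4*m+3} \<ge> m+1"
proof (induction m)
  case 0
  then show ?case using l sum_add3[of f 0] by (simp add: numeral_2_eq_2)
next
  case (Suc m)
  have e: "4 * Suc m + 3 = (4*m+3) + 4" by simp
  have "sum f {..<4 * Suc m + 3} = sum f {..<4*m+3} + f (4*m+3) + f (4*m+3+1) + f (4*m+3+2) + f (4*m+3+3)"
    unfolding e by (rule sum_add4)
  moreover have "f (4*m+3) + f (4*m+3+1) + f (4*m+3+2) + f (4*m+3+3) \<ge> 1"
    using w[of "4*m+3"] Suc.prems by simp
  moreover have "sum f {..<4*m+3} \<ge> m+1" using Suc by simp
  ultimately show ?case by simp
qed

lemma sum_all_ge:
  assumes "RF n g"
  shows "sum g {0..n} \<ge> sum g {..<n}"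
proof -
  have "{0..n} = insert n {..<n}" by auto
  then have "sum g {0..n} = g n + sum g {..<n}" by simp
  moreover have "g n \<ge> 0" using assms by (simp add: RF_def)
  ultimately show ?thesis by simp
qed

lemma lb3:
  assumes "RF n g" "n = 4*m+3"
  shows "sum g {0..n} \<ge> real m + 1"
proof -
  have "sum g {..<4*m+3} \<ge> m+1"
    by (rule left_sum[of n g]) (use assms W_int W_left in auto)
  then show ?thesis using sum_all_ge[OF assms(1)] assms(2) by simp
qed

lemma lb2:
  assumes "RF n g" "n = 4*m+6"
  shows "sum g {0..n} \<ge> real m + 2"
proof -
  have "sum g {..<4*m+3} \<ge> m+1"
    by (rule left_sum[of n g]) (use assms W_int W_left in auto)
  moreover have "g (4*m+3) + g (4*m+3+1) + g (4*m+3+2) \<ge> 1"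
    by (rule W_right[OF assms(1)]) (use assms in simp)
  moreover have "sum g {..<n} = sum g {..<4*m+3} + g (4*m+3) + g (4*m+3+1) + g (4*m+3+2)"
    using assms(2) sum_add3[of g "4*m+3"] by (simp add: add.assoc)
  ultimately show ?thesis using sum_all_ge[OF assms(1)] by simp
qed

lemma lb0:
  assumes "RF n g" "n = 4*m+4"
  shows "sum g {0..n} \<ge> real m + 1"
proof -
  have "sum g {..<4*m+3} \<ge> m+1"
    by (rule left_sum[of n g]) (use assms W_int W_left in auto)
  moreover have "sum g {..<4*m+3} \<le> sum g {..<n}"
    by (rule sum_mono2) (use assms in \<open>auto simp: RF_def\<close>)
  ultimately show ?thesis using sum_all_ge[OF assms(1)] by simp
qed

lemma lb1:
  assumes "RF n g" "n = 4*m+5"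
  shows "2 * sum g {0..n} \<ge> 2 * real m + 3"
proof -
  define f where "f v = g (n - Suc v)" for v
  have A: "sum g {..<4*m+3} \<ge> m+1"
    by (rule left_sum[of n g]) (use assms W_int W_left in auto)
  have B: "sum f {..<4*m+3} \<ge> m+1"
  proof (rule left_sum[of n f])
    fix i assume "i + 3 < n"
    define j where "j = n - 4 - i"
    have j: "n = j + 4 + i" using \<open>i + 3 < n\<close> unfolding j_def by simp
    have "g j + g (j+1) + g (j+2) + g (j+3) \<ge> 1" using W_int[OF assms(1), of j] j by simp
    moreover have "f i = g (j+3)" "f (i+1) = g (j+2)" "f (i+2) = g (j+1)" "f (i+3) = g j"
      using j by (simp_all add: f_def ac_simps)
    ultimately show "f i + f (i+1) + f (i+2) + f (i+3) \<ge> 1" by simp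
  next
    have e: "4*m+2+1 = 4*m+3" "4*m+2+2 = 4*m+4" "4*m+2+3 = 4*m+5" by simp_all
    have "g (4*m+2) + g (4*m+3) + g (4*m+4) \<ge> 1"
      using W_right[OF assms(1), of "4*m+2"] assms(2) unfolding e by blast
    moreover have "f 0 = g (4*m+4)" "f 1 = g (4*m+3)" "f 2 = g (4*m+2)"
      using assms(2) by (simp_all add: f_def add.commute)
    ultimately show "f 0 + f 1 + f 2 \<ge> 1" by linarith
  qed (use assms in simp)
  have e: "4*m+1+2 = 4*m+3" "4*m+1+3 = 4*m+4" "4*m+1+4 = 4*m+5" by simp_all
  have C: "g 0 + g 1 + g (4*m+3) + g (4*m+4) \<ge> 1"
    using W_end[OF assms(1), of "4*m+1"] assms(2) unfolding e by blast
  have "sum f {..<n} = sum g {..<n}" unfolding f_def by (rule sum.nat_diff_reindex)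
  moreover have "sum f {..<n} = sum f {..<4*m+3} + f (4*m+3) + f (4*m+4)"
    using assms(2) by (simp add: add.assoc numeral_eq_Suc ac_simps)
  moreover have "sum g {..<n} = sum g {..<4*m+3} + g (4*m+3) + g (4*m+4)"
    using assms(2) by (simp add: add.assoc numeral_eq_Suc ac_simps)
  moreover have "f (4*m+3) = g 1" "f (4*m+4) = g 0" using assms(2) by (simp_all add: f_def)
  ultimately have "2 * sum g {..<n} \<ge> 2 * real m + 3" using A B C by linarith
  then show ?thesis using sum_all_ge[OF assms(1)] by simp
qed




definition g0 :: "nat \<Rightarrow> nat \<Rightarrow> real" where
  "g0 n v = (if v < n \<and> (even v \<or> v = n - 1) then 1/2 else 0)"

lemma two_marked:
  assumes "a \<in> Rf n x y" "b \<in> Rf n x y" "a \<noteq> b" "g0 n a = 1/2" "g0 n b = 1/2"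
  shows "1 \<le> sum (g0 n) (Rf n x y)"
proof -
  have fin: "finite (Rf n x y)" by (rule finite_subset[of _ "{..n}"]) (auto simp: Rf_def)
  have "sum (g0 n) {a, b} \<le> sum (g0 n) (Rf n x y)"
    by (rule sum_mono2) (use fin assms in \<open>auto simp: g0_def\<close>)
  then show ?thesis using assms by simp
qed

lemma res_lt:
  assumes n: "n \<ge> 6" and xy: "x < y" "y \<le> n"
  shows "1 \<le> sum (g0 n) (Rf n x y)"
proof (cases "y = n")
  case True
  show ?thesis
  proof (cases "x = 1")
    case True then show ?thesis
      by (intro two_marked[of 4 _ _ _ "n-1"]) (use n xy \<open>y = n\<close> in \<open>auto simp: Rf_def fd_def fan_E_def g0_def\<close>)
  next
    case x1: False
    show ?thesis
    proof (cases "x = 3")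
      case True then show ?thesis
        by (intro two_marked[of 0 _ _ _ "n-1"]) (use n xy \<open>y = n\<close> in \<open>auto simp: Rf_def fd_def fan_E_def g0_def\<close>)
    next
      case False then show ?thesis
        by (intro two_marked[of 0 _ _ _ 2]) (use n xy x1 \<open>y = n\<close> in \<open>auto simp: Rf_def fd_def fan_E_def g0_def\<close>)
    qed
  qed
next
  case yn: False
  show ?thesis
  proof (cases "even x \<or> x = n - 1")
    case mx: True
    show ?thesis
    proof (cases "even y \<or> y = n - 1")
      case True then show ?thesis
        by (intro two_marked[of x _ _ _ y]) (use n xy yn mx in \<open>auto simp: Rf_def fd_def fan_E_def g0_def\<close>)
    next
      case False then show ?thesis
        by (intro two_marked[of x _ _ _ "y+1"]) (use n xy yn mx in \<open>auto simp: Rf_def fd_def fan_E_def g0_def\<close>)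
    qed
  next
    case mx: False
    have ox1: "odd x" using mx by auto
    then have "x \<ge> 1" by (cases x) auto
    note ox = ox1 this
    show ?thesis
    proof (cases "y = x + 2")
      case False then show ?thesis
        by (intro two_marked[of "x-1" _ _ _ "x+1"]) (use n xy yn mx ox in \<open>auto simp: Rf_def fd_def fan_E_def g0_def\<close>)
    next
      case y2: True
      show ?thesis
      proof (cases "y = n - 1")
        case True then show ?thesis
          by (intro two_marked[of "x-1" _ _ _ y]) (use n xy yn mx ox y2 in \<open>auto simp: Rf_def fd_def fan_E_def g0_def\<close>)
      next
        case False then show ?thesis
          by (intro two_marked[of "x-1" _ _ _ "x+3"]) (use n xy yn mx ox y2 in \<open>auto simp: Rf_def fd_def fan_E_def g0_def\<close>)
      qed
    qed
  qed
qed


lemma Rf_sym: "Rf n x y = Rf n y x" by (auto simp: Rf_def)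

lemma RF_g0: assumes "n \<ge> 6" shows "RF n (g0 n)"
  unfolding RF_def
proof (intro conjI allI impI)
  fix v show "0 \<le> g0 n v" "g0 n v \<le> 1" by (auto simp: g0_def)
next
  fix x y assume "x \<le> n" "y \<le> n" "x \<noteq> y"
  then consider "x < y" | "y < x" by linarith
  then show "1 \<le> sum (g0 n) (Rf n x y)"
  proof cases
    case 1 then show ?thesis using res_lt assms \<open>y \<le> n\<close> by blast
  next
    case 2 then show ?thesis using res_lt[OF assms 2 \<open>x \<le> n\<close>] Rf_sym by metis
  qed
qed

definition hh :: "nat \<Rightarrow> real" where "hh v = (if even v then 1/2 else 0)"

lemma sum_hh: "sum hh {..<N} = real ((N+1) div 2) / 2"
proof (induction N)
  case 0 then show ?case by simp
next
  case (Suc N)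
  show ?case
  proof (cases "even N")
    case True
    then have "(Suc N + 1) div 2 = (N+1) div 2 + 1" by presburger
    then show ?thesis using Suc True by (simp add: hh_def field_simps)
  next
    case False
    then have "(Suc N + 1) div 2 = (N+1) div 2" by presburger
    then show ?thesis using Suc False by (simp add: hh_def)
  qed
qed

lemma sum_g0:
  assumes "n \<ge> 1"
  shows "sum (g0 n) {0..n} = real (n div 2) / 2 + 1/2"
proof -
  obtain p where p: "n = Suc p" using assms by (cases n) auto
  have "{0..n} = insert n (insert p {..<p})" using p by auto
  then have "sum (g0 n) {0..n} = g0 n n + (g0 n p + sum (g0 n) {..<p})" using p by simp
  also have "sum (g0 n) {..<p} = sum hh {..<p}"
    by (rule sum.cong) (use p in \<open>auto simp: g0_def hh_def\<close>)
  finally show ?thesis using p sum_hh[of p] by (simp add: g0_def)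
qed




lemma Rf_sum: "sum g (Rf n x y) = (\<Sum>z\<in>{0..n}. if fd n x z \<noteq> fd n y z then g z else 0)"
proof -
  have "Rf n x y = {z \<in> {0..n}. fd n x z \<noteq> fd n y z}" by (auto simp: Rf_def)
  moreover have "sum g {z \<in> {0..n}. fd n x z \<noteq> fd n y z} = (\<Sum>z\<in>{0..n}. if fd n x z \<noteq> fd n y z then g z else 0)"
    by (rule sum.inter_filter) simp
  ultimately show ?thesis by simp
qed

lemma RF_alt: "RF n g \<longleftrightarrow> (\<forall>v\<in>{0..n}. 0 \<le> g v \<and> g v \<le> 1) \<and>
   (\<forall>x\<in>{0..n}. \<forall>y\<in>{0..n}. x \<noteq> y \<longrightarrow> 1 \<le> (\<Sum>z\<in>{0..n}. if fd n x z \<noteq> fd n y z then g z else 0))"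
  unfolding RF_def Rf_sum Ball_def atLeastAtMost_iff by auto

lemma RF_c: "RF n g \<Longrightarrow> x \<le> n \<Longrightarrow> y \<le> n \<Longrightarrow> x \<noteq> y \<Longrightarrow>
   1 \<le> (\<Sum>z\<in>{0..n}. if fd n x z \<noteq> fd n y z then g z else 0)"
  by (simp add: RF_alt)

lemma i1: "{0..1::nat} = {0,1}" by auto
lemma i2: "{0..2::nat} = {0,1,2}" by auto
lemma i3: "{0..3::nat} = {0,1,2,3}" by auto
lemma i4: "{0..4::nat} = {0,1,2,3,4}" by auto
lemma i5: "{0..5::nat} = {0,1,2,3,4,5}" by auto

lemmas fsimps = fd_def fan_E_def i1 i2 i3 i4 i5

lemma small1: "frac_dim (fan_V 1) (fan_E 1) = 1"
proof (rule fd_eq_min[of _ "\<lambda>v. if v = 0 then 1 else 0"])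
  show "RF 1 (\<lambda>v. if v = 0 then 1 else 0)" unfolding RF_alt i1 by (simp add: fd_def fan_E_def)
  show "sum (\<lambda>v. if v = 0 then 1 else 0) {0..1::nat} = (1::real)" by (simp add: fsimps)
  fix g assume "RF 1 g"
  from RF_c[OF this, of 0 1] show "sum g {0..1} \<ge> 1" by (simp add: fsimps)
qed simp

lemma small2: "frac_dim (fan_V 2) (fan_E 2) = 3/2"
proof (rule fd_eq_min[of _ "\<lambda>v. 1/2"])
  show "RF 2 (\<lambda>v. 1/2)" by (simp add: RF_alt fsimps)
  show "sum (\<lambda>v. 1/2) {0..2::nat} = (3/2::real)" by (simp add: fsimps)
  fix g assume g: "RF 2 g"
  from RF_c[OF g, of 0 1] RF_c[OF g, of 0 2] RF_c[OF g, of 1 2]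
  show "sum g {0..2} \<ge> 3/2" by (simp add: fsimps)
qed simp

lemma small3: "frac_dim (fan_V 3) (fan_E 3) = 2"
proof (rule fd_eq_min[of _ "\<lambda>v. if v < 2 then 1 else 0"])
  show "RF 3 (\<lambda>v. if v < 2 then 1 else 0)" by (simp add: RF_alt fsimps)
  show "sum (\<lambda>v. if v < 2 then 1 else 0) {0..3::nat} = (2::real)" by (simp add: fsimps)
  fix g assume g: "RF 3 g"
  from RF_c[OF g, of 0 2] RF_c[OF g, of 1 3]
  show "sum g {0..3} \<ge> 2" by (simp add: fsimps)
qed simp

lemma small4: "frac_dim (fan_V 4) (fan_E 4) = 5/3"
proof (rule fd_eq_min[of _ "\<lambda>v. 1/3"])
  show "RF 4 (\<lambda>v. 1/3)" by (simp add: RF_alt fsimps)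
  show "sum (\<lambda>v. 1/3) {0..4::nat} = (5/3::real)" by (simp add: fsimps)
  fix g assume g: "RF 4 g"
  from RF_c[OF g, of 0 1] RF_c[OF g, of 0 2] RF_c[OF g, of 1 4] RF_c[OF g, of 2 4]
  show "sum g {0..4} \<ge> 5/3" by (simp add: fsimps)
qed simp

lemma small5: "frac_dim (fan_V 5) (fan_E 5) = 5/3"
proof (rule fd_eq_min[of _ "\<lambda>v. if v < 5 then 1/3 else 0"])
  show "RF 5 (\<lambda>v. if v < 5 then 1/3 else 0)" by (simp add: RF_alt fsimps)
  show "sum (\<lambda>v. if v < 5 then 1/3 else 0) {0..5::nat} = (5/3::real)" by (simp add: fsimps)
  fix g assume g: "RF 5 g"
  from RF_c[OF g, of 0 1] RF_c[OF g, of 0 2] RF_c[OF g, of 1 5] RF_c[OF g, of 2 5]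
  show "sum g {0..5} \<ge> 5/3" by (simp add: fsimps)
qed simp




lemma upper_g0:
  assumes "n \<ge> 6"
  shows "RF n (g0 n)" "sum (g0 n) {0..n} = (if even n then (real n + 2) / 4 else (real n + 1) / 4)"
proof -
  show "RF n (g0 n)" using RF_g0 assms .
  have s: "sum (g0 n) {0..n} = real (n div 2) / 2 + 1/2" using sum_g0 assms by simp
  show "sum (g0 n) {0..n} = (if even n then (real n + 2) / 4 else (real n + 1) / 4)"
  proof (cases "even n")
    case True
    then obtain q where "n = 2*q" by blast
    then show ?thesis using s by simp
  next
    case False
    then obtain q where "n = 2*q+1" using oddE by blast
    then show ?thesis using s by simp
  qed
qed

theorem theorem3p3:
  fixes k :: nat
  assumes "k \<ge> 1"
  shows "(\<forall>n \<ge> 1. trunc_frac_dim k (fan_V n) (fan_E n) = frac_dim (fan_V n) (fan_E n))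
    \<and> (\<forall>n. n \<in> {1, 2, 3} \<longrightarrow> frac_dim (fan_V n) (fan_E n) = (real n + 1) / 2)
    \<and> (\<forall>n. n \<in> {4, 5} \<longrightarrow> frac_dim (fan_V n) (fan_E n) = 5 / 3)
    \<and> (\<forall>n. n \<ge> 6 \<and> (n mod 4 = 1 \<or> n mod 4 = 3) \<longrightarrow> frac_dim (fan_V n) (fan_E n) = (real n + 1) / 4)
    \<and> (\<forall>n. n \<ge> 6 \<and> n mod 4 = 2 \<longrightarrow> frac_dim (fan_V n) (fan_E n) = (real n + 2) / 4)
    \<and> (\<forall>n. n \<ge> 8 \<and> n mod 4 = 0 \<longrightarrow>
          real n / 4 \<le> trunc_frac_dim k (fan_V n) (fan_E n)
        \<and> trunc_frac_dim k (fan_V n) (fan_E n) = frac_dim (fan_V n) (fan_E n)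
        \<and> frac_dim (fan_V n) (fan_E n) \<le> (real n + 2) / 4)"
proof (intro conjI allI impI)
  fix n :: nat assume "n \<ge> 1"
  then show "trunc_frac_dim k (fan_V n) (fan_E n) = frac_dim (fan_V n) (fan_E n)"
    using trunc_eq assms by blast
next
  fix n :: nat assume "n \<in> {1, 2, 3}"
  then show "frac_dim (fan_V n) (fan_E n) = (real n + 1) / 2"
    using small1 small2 small3 by auto
next
  fix n :: nat assume "n \<in> {4, 5}"
  then show "frac_dim (fan_V n) (fan_E n) = 5 / 3"
    using small4 small5 by auto
next
  fix n :: nat assume h: "n \<ge> 6 \<and> (n mod 4 = 1 \<or> n mod 4 = 3)"
  then have odd: "odd n" by presburger
  show "frac_dim (fan_V n) (fan_E n) = (real n + 1) / 4"
  proof (rule fd_eq_min[of _ "g0 n"])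
    show "1 \<le> n" "RF n (g0 n)" using h upper_g0 by auto
    show "sum (g0 n) {0..n} = (real n + 1) / 4" using h upper_g0(2)[of n] odd by simp
    fix g assume g: "RF n g"
    show "sum g {0..n} \<ge> (real n + 1) / 4"
    proof (cases "n mod 4 = 3")
      case True
      define m where "m = n div 4"
      have "n = 4*m+3" using True unfolding m_def by presburger
      then show ?thesis using lb3[OF g, of m] by simp
    next
      case False
      define m where "m = (n - 5) div 4"
      have "n = 4*m+5" using False h unfolding m_def by presburger
      then show ?thesis using lb1[OF g, of m] by simp
    qed
  qed
next
  fix n :: nat assume h: "n \<ge> 6 \<and> n mod 4 = 2"
  then have ev: "even n" by presburger
  show "frac_dim (fan_V n) (fan_E n) = (real n + 2) / 4"
  proof (rule fd_eq_min[of _ "g0 n"])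
    show "1 \<le> n" "RF n (g0 n)" using h upper_g0 by auto
    show "sum (g0 n) {0..n} = (real n + 2) / 4" using h upper_g0(2)[of n] ev by simp
    fix g assume g: "RF n g"
    define m where "m = (n - 6) div 4"
    have "n = 4*m+6" using h unfolding m_def by presburger
    then show "sum g {0..n} \<ge> (real n + 2) / 4" using lb2[OF g, of m] by simp
  qed
next
  fix n :: nat assume h: "n \<ge> 8 \<and> n mod 4 = 0"
  then have ev: "even n" by presburger
  have te: "trunc_frac_dim k (fan_V n) (fan_E n) = frac_dim (fan_V n) (fan_E n)"
    using trunc_eq assms h by simp
  have b: "real n / 4 \<le> frac_dim (fan_V n) (fan_E n) \<and> frac_dim (fan_V n) (fan_E n) \<le> (real n + 2) / 4"
  proof (rule fd_bounds[of _ "g0 n"])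
    show "1 \<le> n" "RF n (g0 n)" using h upper_g0 by auto
    show "sum (g0 n) {0..n} \<le> (real n + 2) / 4" using h upper_g0(2)[of n] ev by simp
    fix g assume g: "RF n g"
    define m where "m = (n - 4) div 4"
    have "n = 4*m+4" using h unfolding m_def by presburger
    then show "sum g {0..n} \<ge> real n / 4" using lb0[OF g, of m] by simp
  qed
  show "real n / 4 \<le> trunc_frac_dim k (fan_V n) (fan_E n)" using te b by simp
  show "trunc_frac_dim k (fan_V n) (fan_E n) = frac_dim (fan_V n) (fan_E n)" by (rule te)
  show "frac_dim (fan_V n) (fan_E n) \<le> (real n + 2) / 4" using b by simp
qed


end
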